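(* Under the hypotheses of Theorem 1 (stated in the context), with probability one there exists $n_0$ such that for all $n\ge n_0$, denoting by $\hat m_{n,1}<\dots<\hat m_{n,r-1}$ the local minimizers of $\hat f_n$ in $(a,b)$ and by $F$ the distribution function of $P$, $$d_P(\widehat{\mathscr C}_n,\mathscr C_0)=\sum_{j=1}^{r-1}\bigl|F(\hat m_{n,j})-F(m_j)\bigr|.$$
   Context: Hypotheses: $P$ is a probability distribution on $\mathbb R$ with density $f$, $f=0$ outside $[a,b]$ ($a<b$), $f|_{[a,b]}$ is three times continuously differentiable on $[a,b]$, $f'(a)\ne0$, $f'(b)\ne0$, $f$ has finitely many critical points in $(a,b)$, all with $f''\neq0$; $m_1<\dots<m_{r-1}$ are the local minimizers of $f$ in $(a,b)$. $(\hat f_n)$ are random functions, each twice continuously differentiable on $[a,b]$, with $\sup_{[a,b]}|\hat f_n^{(j)}-f^{(j)}|\to0$ almost surely for $j=1,2$. Modal clustering induced by $g$: if $g$ has finitely many local minimizers $\mu_1<\dots<\mu_k$ in $(a,b)$, it is $\{(-\infty,\mu_1),(\mu_1,\mu_2),\dots,(\mu_k,\infty)\}$; $\mathscr C_0$ and $\widehat{\mathscr C}_n$ are those induced by $f$ and $\hat f_n$. For $P$-clusterings $\mathscr C=\{C_1,\dots,C_r\}$, $\mathscr D=\{D_1,\dots,D_s\}$ with $r\le s$, put $C_i=\varnothing$ for $r<i\le s$ and $d_P(\mathscr C,\mathscr D)=\frac12\min_\sigma\sum_{i=1}^sP(C_i\triangle D_{\sigma(i)})$ over permutations $\sigma$ of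 $\{1,\dots,s\}$. *)

theory Defs
  imports "HOL-Probability.Probability" "HOL-Combinatorics.Permutations"
begin

definition loc_minimizers :: "(real \<Rightarrow> real) \<Rightarrow> real \<Rightarrow> real \<Rightarrow> real set" where
  "loc_minimizers g a b =
     {x \<in> {a<..<b}. \<exists>e>0. \<forall>y. \<bar>y - x\<bar> < e \<longrightarrow> g x \<le> g y}"

definition modal_clustering :: "(real \<Rightarrow> real) \<Rightarrow> real \<Rightarrow> real \<Rightarrow> real set list" where
  "modal_clustering g a b =
     (let mu = sorted_list_of_set (loc_minimizers g a b); k = length mu
      in map (\<lambda>i. {x. (i = 0 \<or> mu ! (i - 1) < x) \<and> (i = k \<or> x < mu ! i)}) [0..<k+1])"

definition clust_dist :: "real measure \<Rightarrow> real set list \<Rightarrow> real set list \<Rightarrow> real" where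
  "clust_dist P Cs Ds =
     (let s = max (length Cs) (length Ds);
          C = (\<lambda>i. if i < length Cs then Cs ! i else {});
          D = (\<lambda>i. if i < length Ds then Ds ! i else {})
      in (1/2) * Min ((\<lambda>\<sigma>. \<Sum>i<s. measure P ((C i - D (\<sigma> i)) \<union> (D (\<sigma> i) - C i)))
                       ` {\<sigma>. \<sigma> permutes {..<s}}))"

end

theory Submission
  imports Defs
begin


lemma deriv_int:
  assumes "x \<in> {a<..<b}" "(g has_real_derivative D) (at x within {a..b})"
  shows "(g has_real_derivative D) (at x)"
  using assms at_within_interior[of x "{a..b}"] by (simp add: interior_atLeastAtMost_real)

lemma deriv_cont_on:
  assumes "\<And>x. x \<in> {a..b} \<Longrightarrow> (g has_real_derivative g1 x) (at x within {a..b})"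
  shows "continuous_on {a..b} g"
  using assms DERIV_continuous continuous_on_eq_continuous_within by blast

lemma mvt_pos:
  fixes g g1 :: "real \<Rightarrow> real"
  assumes "u < v" "\<And>t. u \<le> t \<Longrightarrow> t \<le> v \<Longrightarrow> (g has_real_derivative g1 t) (at t)"
    "\<And>t. u < t \<Longrightarrow> t < v \<Longrightarrow> g1 t > 0"
  shows "g u < g v"
proof -
  obtain z where "u < z" "z < v" "g v - g u = (v - u) * g1 z"
    using MVT2[of u v g g1] assms by blast
  moreover have "g1 z > 0" using assms calculation by auto
  ultimately show ?thesis using assms(1) by (smt (verit) mult_pos_pos)
qed

lemma mvt_neg:
  fixes g g1 :: "real \<Rightarrow> real"
  assumes "u < v" "\<And>t. u \<le> t \<Longrightarrow> t \<le> v \<Longrightarrow> (g has_real_derivative g1 t) (at t)"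
    "\<And>t. u < t \<Longrightarrow> t < v \<Longrightarrow> g1 t < 0"
  shows "g v < g u"
proof -
  obtain z where "u < z" "z < v" "g v - g u = (v - u) * g1 z"
    using MVT2[of u v g g1] assms by blast
  moreover have "g1 z < 0" using assms calculation by auto
  ultimately show ?thesis using assms(1) by (smt (verit) mult_pos_neg)
qed

lemma locmin_char:
  fixes g g1 g2 :: "real \<Rightarrow> real"
  assumes d1: "\<And>x. x \<in> {a..b} \<Longrightarrow> (g has_real_derivative g1 x) (at x within {a..b})"
    and d2: "\<And>x. x \<in> {a..b} \<Longrightarrow> (g1 has_real_derivative g2 x) (at x within {a..b})"
    and nd: "\<And>x. x \<in> {a<..<b} \<Longrightarrow> g1 x = 0 \<Longrightarrow> g2 x \<noteq> 0"
  shows "loc_minimizers g a b = {x \<in> {a<..<b}. g1 x = 0 \<and> g2 x > 0}"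
proof -
  have D1: "(g has_real_derivative g1 x) (at x)" if "x \<in> {a<..<b}" for x
    using deriv_int[OF that d1] that by auto
  have D2: "(g1 has_real_derivative g2 x) (at x)" if "x \<in> {a<..<b}" for x
    using deriv_int[OF that d2] that by auto
  show ?thesis
  proof (intro set_eqI iffI)
    fix x assume "x \<in> loc_minimizers g a b"
    then obtain e where x: "x \<in> {a<..<b}" and e: "e > 0" "\<forall>y. \<bar>y - x\<bar> < e \<longrightarrow> g x \<le> g y"
      unfolding loc_minimizers_def by blast
    have "g1 x = 0"
      by (rule DERIV_local_min[OF D1[OF x] e(1)]) (use e in \<open>auto simp: abs_minus_commute\<close>)
    have "g2 x > 0"
    proof (rule ccontr)
      assume "\<not> g2 x > 0"
      with nd x \<open>g1 x = 0\<close> have "g2 x < 0" by force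
      from DERIV_neg_dec_right[OF D2[OF x] this] obtain d where d: "d > 0"
        "\<forall>h>0. h < d \<longrightarrow> g1 x > g1 (x + h)" by blast
      define h where "h = min (min d e) (b - x) / 2"
      have h: "h > 0" "h < d" "h < e" "x + h < b" using d e x unfolding h_def by (auto simp: min_def field_simps)
      have "g (x + h) < g x"
      proof (rule mvt_neg[of x "x + h" g g1])
        show "x < x + h" using h by simp
        show "(g has_real_derivative g1 t) (at t)" if "x \<le> t" "t \<le> x + h" for t
          using D1 that x h by auto
        show "g1 t < 0" if "x < t" "t < x + h" for t
          using d(2)[rule_format, of "t - x"] that h \<open>g1 x = 0\<close> by auto
      qed
      moreover have "g x \<le> g (x + h)" using e(2) h by auto
      ultimately show False by simp
    qed
    with x \<open>g1 x = 0\<close> show "x \<in> {x \<in> {a<..<b}. g1 x = 0 \<and> g2 x > 0}" by auto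
  next
    fix x assume "x \<in> {x \<in> {a<..<b}. g1 x = 0 \<and> g2 x > 0}"
    then have x: "x \<in> {a<..<b}" and z: "g1 x = 0" and p: "g2 x > 0" by auto
    from DERIV_pos_inc_right[OF D2[OF x] p] obtain d1 where d1: "d1 > 0"
        "\<forall>h>0. h < d1 \<longrightarrow> g1 x < g1 (x + h)" by blast
    from DERIV_pos_inc_left[OF D2[OF x] p] obtain d2 where d2: "d2 > 0"
        "\<forall>h>0. h < d2 \<longrightarrow> g1 (x - h) < g1 x" by blast
    define e where "e = min (min d1 d2) (min (x - a) (b - x))"
    have e: "e > 0" using d1 d2 x by (auto simp: e_def)
    have ed: "e \<le> d1" "e \<le> d2" "e \<le> x - a" "e \<le> b - x" by (simp_all add: e_def)
    have "\<forall>y. \<bar>y - x\<bar> < e \<longrightarrow> g x \<le> g y"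
    proof (intro allI impI)
      fix y assume y: "\<bar>y - x\<bar> < e"
      consider "y = x" | "x < y" | "y < x" by linarith
      then show "g x \<le> g y"
      proof cases
        case 1 then show ?thesis by simp
      next
        case 2
        have "g x < g y"
        proof (rule mvt_pos[of x y g g1])
          show "(g has_real_derivative g1 t) (at t)" if "x \<le> t" "t \<le> y" for t
            using D1 that x y ed by (intro D1) (auto simp: abs_if split: if_splits)
          show "g1 t > 0" if "x < t" "t < y" for t
            using d1(2)[rule_format, of "t - x"] that y z ed by (auto simp: abs_if split: if_splits)
        qed fact
        then show ?thesis by simp
      next
        case 3
        have "g x < g y"
        proof (rule mvt_neg[of y x g g1])
          show "(g has_real_derivative g1 t) (at t)" if "y \<le> t" "t \<le> x" for t
            using D1 that x y ed by (intro D1) (auto simp: abs_if split: if_splits)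
          show "g1 t < 0" if "y < t" "t < x" for t
            using d2(2)[rule_format, of "x - t"] that y z ed by (auto simp: abs_if split: if_splits)
        qed fact
        then show ?thesis by simp
      qed
    qed
    with x e show "x \<in> loc_minimizers g a b" unfolding loc_minimizers_def by blast
  qed
qed




locale pm = prob_space P for P :: "real measure" +
  fixes a b :: real
  assumes sets_P: "sets P = sets borel"
    and pt_null: "\<And>x. {x} \<in> null_sets P"
    and out_null: "UNIV - {a<..<b} \<in> null_sets P"
begin

definition F where "F t = measure P {..t}"

lemma borelP: "A \<in> sets borel \<Longrightarrow> A \<in> sets P"
  using sets_P by simp

lemma openP: "open A \<Longrightarrow> A \<in> sets P"
  using borelP by auto

lemma fin_null: "finite A \<Longrightarrow> A \<in> null_sets P"
proof (induction A rule: finite_induct)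
  case empty then show ?case by simp
next
  case (insert x A)
  have "insert x A = {x} \<union> A" by auto
  then show ?case using insert pt_null null_sets.Un by metis
qed

lemma F_mono: "s \<le> t \<Longrightarrow> F s \<le> F t"
  unfolding F_def by (rule finite_measure_mono) (auto intro: borelP)

lemma Ioc_meas: "s \<le> t \<Longrightarrow> measure P {s<..t} = F t - F s"
proof -
  assume st: "s \<le> t"
  have "{s<..t} = {..t} - {..s}" by auto
  then show ?thesis unfolding F_def using st
    by (simp add: finite_measure_Diff borelP)
qed

lemma Ioo_meas: "s \<le> t \<Longrightarrow> measure P {s<..<t} = F t - F s"
proof -
  assume st: "s \<le> t"
  have "{s<..<t} = {s<..t} - {t}" by auto
  then have "measure P {s<..<t} = measure P {s<..t}"
    using measure_Diff_null_set[of "{s<..t}" P "{t}"] pt_null borelP by auto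
  then show ?thesis using Ioc_meas st by simp
qed

lemma abs_F: "\<bar>F u1 - F u2\<bar> = F (max u1 u2) - F (min u1 u2)"
  using F_mono[of u1 u2] F_mono[of u2 u1] by (cases "u1 \<le> u2") (auto simp: max_def min_def)

lemma SD:
  assumes "max u1 u2 < min v1 v2"
  shows "measure P (({u1<..<v1} - {u2<..<v2}) \<union> ({u2<..<v2} - {u1<..<v1}))
         = \<bar>F u1 - F u2\<bar> + \<bar>F v1 - F v2\<bar>"
proof -
  let ?S = "({u1<..<v1} - {u2<..<v2}) \<union> ({u2<..<v2} - {u1<..<v1})"
  have eq: "?S - {u1,u2,v1,v2} = {min u1 u2<..<max u1 u2} \<union> {min v1 v2<..<max v1 v2}"
    using assms by (auto simp: min_def max_def)
  have "measure P ?S = measure P (?S - {u1,u2,v1,v2})"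
    using measure_Diff_null_set[of ?S P "{u1,u2,v1,v2}"] fin_null[of "{u1,u2,v1,v2}"] borelP
    by auto
  also have "\<dots> = measure P {min u1 u2<..<max u1 u2} + measure P {min v1 v2<..<max v1 v2}"
    unfolding eq using assms by (intro finite_measure_Union) (auto intro: borelP)
  also have "\<dots> = \<bar>F u1 - F u2\<bar> + \<bar>F v1 - F v2\<bar>"
    by (simp add: Ioo_meas abs_F)
  finally show ?thesis .
qed

lemma restrict: "A \<in> sets borel \<Longrightarrow> measure P A = measure P (A \<inter> {a<..<b})"
proof -
  assume A: "A \<in> sets borel"
  have "A \<inter> {a<..<b} = A - (UNIV - {a<..<b})" by auto
  then show ?thesis using measure_Diff_null_set[of A P "UNIV - {a<..<b}"] out_null A borelP by simp
qed

end



definition cl :: "real list \<Rightarrow> nat \<Rightarrow> real set" where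
  "cl l i = {x. (i = 0 \<or> l ! (i - 1) < x) \<and> (i = length l \<or> x < l ! i)}"

definition clus :: "real list \<Rightarrow> real set list" where
  "clus l = map (cl l) [0..<length l + 1]"

lemma modal_clus: "modal_clustering g a b = clus (sorted_list_of_set (loc_minimizers g a b))"
  by (simp only: modal_clustering_def clus_def Let_def cl_def[abs_def])

lemma cl_open: "open (cl l i)"
proof -
  have "cl l i = (if i = 0 then UNIV else {l ! (i - 1)<..}) \<inter> (if i = length l then UNIV else {..<l ! i})"
    by (auto simp: cl_def)
  then show ?thesis by (auto intro!: open_Int)
qed

context pm
begin

definition Lo where "Lo l i = (if i = 0 then a else l ! (i - 1))"
definition Up where "Up l i = (if i = length l then b else l ! i)"

lemma cl_restr:
  assumes "i \<le> length l" "set l \<subseteq> {a<..<b}"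
  shows "cl l i \<inter> {a<..<b} = {Lo l i<..<Up l i}"
proof -
  have 1: "i > 0 \<Longrightarrow> l ! (i - 1) \<in> {a<..<b}"
  proof -
    assume "i > 0" then have "l ! (i - 1) \<in> set l" using assms(1) by (intro nth_mem) simp
    then show ?thesis using assms(2) by blast
  qed
  have 2: "i < length l \<Longrightarrow> l ! i \<in> {a<..<b}" using assms(2) nth_mem by blast
  show ?thesis using 1 2 assms(1) by (auto simp: cl_def Lo_def Up_def)
qed

lemma T_eq:
  assumes "i \<le> length l1" "set l1 \<subseteq> {a<..<b}" "j \<le> length l2" "set l2 \<subseteq> {a<..<b}"
  shows "measure P ((cl l1 i - cl l2 j) \<union> (cl l2 j - cl l1 i)) =
     measure P (({Lo l1 i<..<Up l1 i} - {Lo l2 j<..<Up l2 j}) \<union> ({Lo l2 j<..<Up l2 j} - {Lo l1 i<..<Up l1 i}))"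
proof -
  have "measure P ((cl l1 i - cl l2 j) \<union> (cl l2 j - cl l1 i)) =
    measure P (((cl l1 i - cl l2 j) \<union> (cl l2 j - cl l1 i)) \<inter> {a<..<b})"
    by (rule restrict) (use cl_open in auto)
  also have "((cl l1 i - cl l2 j) \<union> (cl l2 j - cl l1 i)) \<inter> {a<..<b} =
     ((cl l1 i \<inter> {a<..<b}) - (cl l2 j \<inter> {a<..<b})) \<union> ((cl l2 j \<inter> {a<..<b}) - (cl l1 i \<inter> {a<..<b}))"
    by auto
  finally show ?thesis using cl_restr assms by simp
qed

lemma CD:
  assumes len: "length m = k" "length mh = k"
    and sm: "sorted m"
    and inab: "set m \<subseteq> {a<..<b}" "set mh \<subseteq> {a<..<b}"
    and ord: "\<And>i. i \<le> k \<Longrightarrow> max (Lo mh i) (Lo m i) < min (Up mh i) (Up m i)"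
    and mu: "\<And>i. i \<le> k \<Longrightarrow> \<mu> \<le> measure P {Lo m i<..<Up m i}"
    and small: "(\<Sum>j<k. \<bar>F (mh ! j) - F (m ! j)\<bar>) \<le> \<mu> / 4"
  shows "clust_dist P (clus mh) (clus m) = (\<Sum>j<k. \<bar>F (mh ! j) - F (m ! j)\<bar>)"
proof -
  define d where "d j = \<bar>F (mh ! j) - F (m ! j)\<bar>" for j
  define T where "T i j = measure P ((cl mh i - cl m j) \<union> (cl m j - cl mh i))" for i j
  define S where "S \<sigma> = (\<Sum>i<k+1. T i (\<sigma> i))" for \<sigma> :: "nat \<Rightarrow> nat"
  have Tnn: "T i j \<ge> 0" for i j unfolding T_def by simp
  have Tii: "T i i = \<bar>F (Lo mh i) - F (Lo m i)\<bar> + \<bar>F (Up mh i) - F (Up m i)\<bar>" if "i \<le> k" for i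
    unfolding T_def using T_eq[of i mh i m] SD[OF ord[OF that]] that len inab by simp
  have s1: "(\<Sum>i<k+1. \<bar>F (Lo mh i) - F (Lo m i)\<bar>) = (\<Sum>j<k. d j)"
    using sum.lessThan_Suc_shift[of "\<lambda>i. \<bar>F (Lo mh i) - F (Lo m i)\<bar>" k]
    by (simp add: Lo_def d_def)
  have s2: "(\<Sum>i<k+1. \<bar>F (Up mh i) - F (Up m i)\<bar>) = (\<Sum>j<k. d j)"
    using len by (simp add: Up_def d_def)
  have Sid: "S id = 2 * (\<Sum>j<k. d j)"
    using Tii s1 s2 by (simp add: S_def sum.distrib)
  have Sid_small: "S id \<le> \<mu> / 2" using Sid small by (simp add: d_def)
  have disj: "cl m i \<inter> cl m j = {}" if "i < j" "j \<le> k" for i j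
  proof -
    have "m ! i \<le> m ! (j - 1)" using sm that len by (intro sorted_nth_mono) auto
    then show ?thesis using that len by (auto simp: cl_def)
  qed
  have Dmeas: "measure P (cl m j) \<ge> \<mu>" if "j \<le> k" for j
  proof -
    have "measure P (cl m j) = measure P (cl m j \<inter> {a<..<b})" by (rule restrict) (use cl_open in auto)
    also have "\<dots> = measure P {Lo m j<..<Up m j}" using cl_restr[of j m] that len inab by simp
    finally show ?thesis using mu[OF that] by simp
  qed
  have Tlow: "T i j \<ge> \<mu> / 2" if "i \<le> k" "j \<le> k" "i \<noteq> j" for i j
  proof -
    have dj: "cl m i \<inter> cl m j = {}" using disj[of i j] disj[of j i] that by (cases "i < j") auto
    have sub: "cl m j \<subseteq> ((cl mh i - cl m j) \<union> (cl m j - cl mh i)) \<union> ((cl mh i - cl m i) \<union> (cl m i - cl mh i))"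
      using dj by auto
    have "measure P (cl m j) \<le> measure P (((cl mh i - cl m j) \<union> (cl m j - cl mh i)) \<union> ((cl mh i - cl m i) \<union> (cl m i - cl mh i)))"
      by (rule finite_measure_mono[OF sub]) (intro borelP; use cl_open in auto)
    also have "\<dots> \<le> T i j + T i i"
      unfolding T_def by (rule measure_Un_le) (intro borelP; use cl_open in auto)+
    finally have "\<mu> \<le> T i j + T i i" using Dmeas[OF that(2)] by simp
    moreover have "T i i \<le> S id"
    proof -
      have "T i i \<le> (\<Sum>i<k+1. T i i)"
        using that Tnn by (intro member_le_sum) auto
      then show ?thesis unfolding S_def by simp
    qed
    ultimately show ?thesis using Sid_small by simp
  qed
  have Smin: "S id \<le> S \<sigma>" if "\<sigma> permutes {..<k+1}" for \<sigma>
  proof (cases "\<forall>i<k+1. \<sigma> i = i")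
    case True
    then have "S \<sigma> = S id" unfolding S_def by (intro sum.cong) auto
    then show ?thesis by simp
  next
    case False
    then obtain i where i: "i < k + 1" "\<sigma> i \<noteq> i" by auto
    have si: "\<sigma> i < k + 1" using permutes_in_image[OF that] i by simp
    have "T i (\<sigma> i) \<le> S \<sigma>"
      unfolding S_def using i Tnn by (intro member_le_sum[where f="\<lambda>i. T i (\<sigma> i)"]) auto
    moreover have "T i (\<sigma> i) \<ge> \<mu> / 2" using Tlow[of i "\<sigma> i"] i si by simp
    ultimately show ?thesis using Sid_small by simp
  qed
  have cd: "clust_dist P (clus mh) (clus m) = 1/2 * Min (S ` {\<sigma>. \<sigma> permutes {..<k+1}})"
  proof -
    have "(\<lambda>\<sigma>. \<Sum>i<max (length (clus mh)) (length (clus m)).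
             measure P (((if i < length (clus mh) then clus mh ! i else {}) -
                 (if \<sigma> i < length (clus m) then clus m ! \<sigma> i else {})) \<union>
                ((if \<sigma> i < length (clus m) then clus m ! \<sigma> i else {}) -
                 (if i < length (clus mh) then clus mh ! i else {}))))
          ` {\<sigma>. \<sigma> permutes {..<max (length (clus mh)) (length (clus m))}}
       = S ` {\<sigma>. \<sigma> permutes {..<k+1}}"
    proof (intro image_cong)
      show "{\<sigma>. \<sigma> permutes {..<max (length (clus mh)) (length (clus m))}} = {\<sigma>. \<sigma> permutes {..<k+1}}"
        using len by (simp add: clus_def)
      fix \<sigma> assume "\<sigma> \<in> {\<sigma>. \<sigma> permutes {..<k+1}}"
      then have p: "\<sigma> permutes {..<k+1}" by simp
      have pi: "\<And>x. x < k + 1 \<Longrightarrow> \<sigma> x < k + 1" using permutes_in_image[OF p] by auto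
      show "(\<Sum>i<max (length (clus mh)) (length (clus m)).
             measure P (((if i < length (clus mh) then clus mh ! i else {}) -
                 (if \<sigma> i < length (clus m) then clus m ! \<sigma> i else {})) \<union>
                ((if \<sigma> i < length (clus m) then clus m ! \<sigma> i else {}) -
                 (if i < length (clus mh) then clus mh ! i else {})))) = S \<sigma>"
        unfolding S_def T_def using len
        using pi by (intro sum.cong) (auto simp: clus_def simp del: upt_Suc)
    qed
    then show ?thesis unfolding clust_dist_def Let_def by simp
  qed
  have "Min (S ` {\<sigma>. \<sigma> permutes {..<k+1}}) = S id"
    by (rule Min_eqI) (auto intro: finite_permutations Smin permutes_id)
  then show ?thesis using cd Sid by (simp add: d_def)
qed

end



locale dens =
  fixes f f1 f2 :: "real \<Rightarrow> real" and a b :: real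
  assumes ab: "a < b"
    and f_nonneg: "\<And>x. f x \<ge> 0"
    and P_prob: "prob_space (density lborel (\<lambda>x. ennreal (f x)))"
    and f_zero: "\<And>x. x \<notin> {a..b} \<Longrightarrow> f x = 0"
    and f_d1: "\<And>x. x \<in> {a..b} \<Longrightarrow> (f has_real_derivative f1 x) (at x within {a..b})"
    and f_d2: "\<And>x. x \<in> {a..b} \<Longrightarrow> (f1 has_real_derivative f2 x) (at x within {a..b})"
    and f2_cont: "continuous_on {a..b} f2"
    and f1a: "f1 a \<noteq> 0" and f1b: "f1 b \<noteq> 0"
    and crit_fin: "finite {x \<in> {a<..<b}. f1 x = 0}"
    and crit_nondeg: "\<And>x. x \<in> {a<..<b} \<Longrightarrow> f1 x = 0 \<Longrightarrow> f2 x \<noteq> 0"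
begin

abbreviation "P \<equiv> density lborel (\<lambda>x. ennreal (f x))"

lemma f_cont: "continuous_on {a..b} f" using deriv_cont_on f_d1 by blast
lemma f1_cont: "continuous_on {a..b} f1" using deriv_cont_on f_d2 by blast

lemma f_meas: "f \<in> borel_measurable borel"
proof -
  have "(\<lambda>x. indicator {a..b} x *\<^sub>R f x) \<in> borel_measurable borel"
    by (rule borel_measurable_continuous_on_indicator) (auto intro: f_cont)
  moreover have "(\<lambda>x. indicator {a..b} x *\<^sub>R f x) = f"
    using f_zero by (auto simp: indicator_def fun_eq_iff)
  ultimately show ?thesis by simp
qed

lemma fe_meas: "(\<lambda>x. ennreal (f x)) \<in> borel_measurable lborel"
  using f_meas by simp

lemma null_transfer: "A \<in> null_sets lborel \<Longrightarrow> A \<in> null_sets P"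
  by (subst null_sets_density_iff[OF fe_meas]) (auto dest: AE_not_in elim: AE_mp)

lemma pm: "pm P a b"
proof -
  interpret prob_space P by (rule P_prob)
  show ?thesis
  proof
    show "sets P = sets borel" by simp
    show "{x} \<in> null_sets P" for x by (rule null_transfer) (rule finite_imp_null_set_lborel, simp)
    have fz: "x \<notin> {a<..<b} \<Longrightarrow> x \<noteq> a \<Longrightarrow> x \<noteq> b \<Longrightarrow> f x = 0" for x
      using f_zero[of x] by force
    have "{a, b} \<in> null_sets lborel" by (rule finite_imp_null_set_lborel) simp
    from AE_not_in[OF this]
    have "AE x in lborel. x \<in> UNIV - {a<..<b} \<longrightarrow> ennreal (f x) = 0"
      by eventually_elim (use fz in auto)
    then show "UNIV - {a<..<b} \<in> null_sets P"
      by (subst null_sets_density_iff[OF fe_meas]) auto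
  qed
qed

sublocale pm P a b by (rule pm)

lemma f_bound: "\<exists>B>0. \<forall>x. f x \<le> B"
proof -
  obtain x0 where x0: "x0 \<in> {a..b}" "\<forall>y\<in>{a..b}. f y \<le> f x0"
    using continuous_attains_sup[OF compact_Icc _ f_cont] ab by auto
  have "f x \<le> max (f x0) 1" for x
    using x0 f_zero[of x] by (cases "x \<in> {a..b}") (auto simp: le_max_iff_disj)
  then show ?thesis by (intro exI[of _ "max (f x0) 1"]) auto
qed

lemma emeasure_upper:
  assumes "\<forall>x. f x \<le> B" "A \<in> sets borel"
  shows "emeasure P A \<le> ennreal B * emeasure lborel A"
proof -
  have "emeasure P A = (\<integral>\<^sup>+x. ennreal (f x) * indicator A x \<partial>lborel)"
    using assms by (intro emeasure_density fe_meas) auto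
  also have "\<dots> \<le> (\<integral>\<^sup>+x. ennreal B * indicator A x \<partial>lborel)"
    using assms by (intro nn_integral_mono) (auto simp: indicator_def intro: ennreal_leI)
  also have "\<dots> = ennreal B * emeasure lborel A" using assms by (intro nn_integral_cmult_indicator) auto
  finally show ?thesis .
qed

lemma F_lip:
  assumes "\<forall>x. f x \<le> B" "s \<le> t"
  shows "F t - F s \<le> B * (t - s)"
proof -
  have B: "B \<ge> 0" using assms(1) f_nonneg[of 0] by (metis order_trans)
  have "ennreal (measure P {s<..t}) = emeasure P {s<..t}" by (simp add: emeasure_eq_measure)
  also have "\<dots> \<le> ennreal B * ennreal (t - s)" using emeasure_upper[OF assms(1), of "{s<..t}"] assms(2) by simp
  also have "\<dots> = ennreal (B * (t - s))" using B assms(2) by (simp add: ennreal_mult)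
  finally have "measure P {s<..t} \<le> B * (t - s)" using B assms(2) by (simp add: ennreal_le_iff)
  then show ?thesis using Ioc_meas[OF assms(2)] by simp
qed

lemma F_lip_abs:
  assumes "\<forall>x. f x \<le> B"
  shows "\<bar>F t - F s\<bar> \<le> B * \<bar>t - s\<bar>"
  using F_lip[OF assms, of s t] F_lip[OF assms, of t s] F_mono[of s t] F_mono[of t s]
  by (cases "s \<le> t") (auto simp: abs_if)

lemma emeasure_lower:
  assumes "\<And>x. x \<in> A \<Longrightarrow> c \<le> f x" "A \<in> sets borel" "c \<ge> 0"
  shows "ennreal c * emeasure lborel A \<le> emeasure P A"
proof -
  have "ennreal c * emeasure lborel A = (\<integral>\<^sup>+x. ennreal c * indicator A x \<partial>lborel)"
    using assms by (intro nn_integral_cmult_indicator[symmetric]) auto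
  also have "\<dots> \<le> (\<integral>\<^sup>+x. ennreal (f x) * indicator A x \<partial>lborel)"
    using assms by (intro nn_integral_mono) (auto simp: indicator_def intro: ennreal_leI)
  also have "\<dots> = emeasure P A"
    using assms by (intro emeasure_density[symmetric] fe_meas) auto
  finally show ?thesis .
qed

lemma not_zero_on:
  assumes "u < v" "a \<le> u" "v \<le> b"
  shows "\<exists>p\<in>{u<..<v}. f p > 0"
proof (rule ccontr)
  assume "\<not> ?thesis"
  then have z: "f p = 0" if "p \<in> {u<..<v}" for p using that f_nonneg[of p] by force
  have "f1 p = 0" if p: "p \<in> {u<..<v}" for p
  proof -
    have pab: "p \<in> {a<..<b}" using p assms by auto
    have "(f has_real_derivative f1 p) (at p)" using deriv_int[OF pab f_d1] pab by auto
    then have "((\<lambda>_. 0) has_real_derivative f1 p) (at p)"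
      by (rule has_field_derivative_transform_within_open[where S="{u<..<v}"]) (use p z in auto)
    then show ?thesis using DERIV_const DERIV_unique by blast
  qed
  then have "{u<..<v} \<subseteq> {x \<in> {a<..<b}. f1 x = 0}" using assms by auto
  then have "finite {u<..<v}" using crit_fin finite_subset by blast
  then show False using assms(1) infinite_Ioo by blast
qed

lemma interval_pos:
  assumes "u < v" "a \<le> u" "v \<le> b"
  shows "measure P {u<..<v} > 0"
proof -
  obtain p where p: "p \<in> {u<..<v}" "f p > 0" using not_zero_on[OF assms] by blast
  have pab: "p \<in> {a<..<b}" using p assms by auto
  have "isCont f p" using continuous_on_interior[OF f_cont, of p] pab by (simp add: interior_atLeastAtMost_real)
  then obtain r where r: "r > 0" "\<forall>y. \<bar>y - p\<bar> < r \<longrightarrow> \<bar>f y - f p\<bar> < f p / 2"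
  proof -
    have "\<forall>e>0. \<exists>d>0. \<forall>y. dist y p < d \<longrightarrow> dist (f y) (f p) < e"
      using \<open>isCont f p\<close> continuous_at_eps_delta by blast
    moreover have "f p / 2 > 0" using p(2) by simp
    ultimately have "\<exists>d>0. \<forall>y. dist y p < d \<longrightarrow> dist (f y) (f p) < f p / 2" by blast
    then show ?thesis using that by (auto simp: dist_real_def)
  qed
  define r' where "r' = min r (min (p - u) (v - p))"
  have r': "r' > 0" "r' \<le> r" "r' \<le> p - u" "r' \<le> v - p" using r p by (auto simp: r'_def)
  have "ennreal (f p / 2) * emeasure lborel {p - r'<..<p + r'} \<le> emeasure P {p - r'<..<p + r'}"
  proof (rule emeasure_lower)
    fix y assume "y \<in> {p - r'<..<p + r'}"
    then have "\<bar>y - p\<bar> < r" using r' by (auto simp: abs_if)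
    then have "\<bar>f y - f p\<bar> < f p / 2" using r(2) by blast
    then show "f p / 2 \<le> f y" by (auto simp: abs_if split: if_splits)
  qed (use p in auto)
  also have "\<dots> \<le> emeasure P {u<..<v}" by (rule emeasure_mono) (use r' in auto)
  finally have ch: "ennreal (f p / 2) * emeasure lborel {p - r'<..<p + r'} \<le> emeasure P {u<..<v}" .
  have e1: "emeasure lborel {p - r'<..<p + r'} = ennreal (2 * r')" using r' by simp
  have e2: "ennreal (f p / 2 * (2 * r')) = ennreal (f p / 2) * ennreal (2 * r')"
    using p r' by (intro ennreal_mult) auto
  have e3: "emeasure P {u<..<v} = ennreal (measure P {u<..<v})" by (simp add: emeasure_eq_measure)
  have "ennreal (f p / 2 * (2 * r')) \<le> ennreal (measure P {u<..<v})"
    using ch unfolding e1 e2 e3 .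
  then have "f p / 2 * (2 * r') \<le> measure P {u<..<v}" by (simp add: ennreal_le_iff)
  moreover have "f p / 2 * (2 * r') > 0" using r' p by simp
  ultimately show ?thesis by linarith
qed

end



lemma ev_lt: "(c::real) > 0 \<Longrightarrow> eventually (\<lambda>x. x < c) (at_right 0)"
  by (rule order_tendstoD(2)[OF tendsto_ident_at]) simp

lemma ev_obtain: "eventually P (at_right (0::real)) \<Longrightarrow> \<exists>x>0. P x"
proof -
  assume "eventually P (at_right (0::real))"
  then have "eventually (\<lambda>x. 0 < x \<and> P x) (at_right (0::real))"
    using eventually_conj[OF eventually_at_right_less] by blast
  from eventually_happens[OF this] show ?thesis
    using trivial_limit_at_right_real[of 0] by (auto simp: trivial_limit_def)
qed

context dens
begin

definition "Z = {x \<in> {a<..<b}. f1 x = 0}"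
definition "Mn = {x \<in> Z. f2 x > 0}"

lemma Z_fin: "finite Z" using crit_fin by (simp add: Z_def)
lemma Mn_fin: "finite Mn" using Z_fin by (simp add: Mn_def)
lemma Mn_Z: "Mn \<subseteq> Z" by (auto simp: Mn_def)

lemma locmin_f: "loc_minimizers f a b = Mn"
proof -
  have "loc_minimizers f a b = {x\<in>{a<..<b}. f1 x = 0 \<and> f2 x > 0}"
    by (rule locmin_char) (use f_d1 f_d2 crit_nondeg in auto)
  then show ?thesis unfolding Mn_def Z_def by blast
qed

definition good where
  "good \<delta> \<longleftrightarrow> \<delta> > 0 \<and> (\<forall>z\<in>Z. a < z - \<delta> \<and> z + \<delta> < b) \<and>
     (\<forall>z\<in>Z. \<forall>z'\<in>Z. z \<noteq> z' \<longrightarrow> 4 * \<delta> < \<bar>z - z'\<bar>) \<and>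
     (\<forall>z\<in>Z. \<forall>y. \<bar>y - z\<bar> \<le> \<delta> \<longrightarrow> \<bar>f2 y - f2 z\<bar> < \<bar>f2 z\<bar> / 2)"

lemma ev_good: "eventually good (at_right 0)"
proof -
  have e1: "eventually (\<lambda>\<delta>. \<forall>z\<in>Z. a < z - \<delta> \<and> z + \<delta> < b) (at_right 0)"
  proof (rule eventually_ball_finite[OF Z_fin], intro ballI)
    fix z assume "z \<in> Z"
    then have "z - a > 0" "b - z > 0" by (auto simp: Z_def)
    from eventually_conj[OF ev_lt[OF this(1)] ev_lt[OF this(2)]]
    show "eventually (\<lambda>\<delta>. a < z - \<delta> \<and> z + \<delta> < b) (at_right 0)"
      by eventually_elim auto
  qed
  have e2: "eventually (\<lambda>\<delta>. \<forall>z\<in>Z. \<forall>z'\<in>Z. z \<noteq> z' \<longrightarrow> 4 * \<delta> < \<bar>z - z'\<bar>) (at_right 0)"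
  proof (rule eventually_ball_finite[OF Z_fin], intro ballI)
    fix z assume "z \<in> Z"
    show "eventually (\<lambda>\<delta>. \<forall>z'\<in>Z. z \<noteq> z' \<longrightarrow> 4 * \<delta> < \<bar>z - z'\<bar>) (at_right 0)"
    proof (rule eventually_ball_finite[OF Z_fin], intro ballI)
      fix z' assume "z' \<in> Z"
      show "eventually (\<lambda>\<delta>. z \<noteq> z' \<longrightarrow> 4 * \<delta> < \<bar>z - z'\<bar>) (at_right 0)"
      proof (cases "z = z'")
        case False
        then have "\<bar>z - z'\<bar> / 4 > 0" by simp
        from ev_lt[OF this] show ?thesis by eventually_elim auto
      qed simp
    qed
  qed
  have e3: "eventually (\<lambda>\<delta>. \<forall>z\<in>Z. \<forall>y. \<bar>y - z\<bar> \<le> \<delta> \<longrightarrow> \<bar>f2 y - f2 z\<bar> < \<bar>f2 z\<bar> / 2) (at_right 0)"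
  proof (rule eventually_ball_finite[OF Z_fin], intro ballI)
    fix z assume z: "z \<in> Z"
    then have zab: "z \<in> {a<..<b}" and "f2 z \<noteq> 0" using crit_nondeg by (auto simp: Z_def)
    then have pos: "\<bar>f2 z\<bar> / 2 > 0" by simp
    have "isCont f2 z" using continuous_on_interior[OF f2_cont, of z] zab
      by (simp add: interior_atLeastAtMost_real)
    then have "\<forall>e>0. \<exists>d>0. \<forall>y. dist y z < d \<longrightarrow> dist (f2 y) (f2 z) < e"
      using continuous_at_eps_delta by blast
    then obtain d where d: "d > 0" "\<forall>y. dist y z < d \<longrightarrow> dist (f2 y) (f2 z) < \<bar>f2 z\<bar> / 2"
      using pos by blast
    from ev_lt[OF d(1)] show "eventually (\<lambda>\<delta>. \<forall>y. \<bar>y - z\<bar> \<le> \<delta> \<longrightarrow> \<bar>f2 y - f2 z\<bar> < \<bar>f2 z\<bar> / 2) (at_right 0)"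
    proof eventually_elim
      case (elim \<delta>)
      show ?case
      proof (intro allI impI)
        fix y assume "\<bar>y - z\<bar> \<le> \<delta>"
        then have "dist y z < d" using elim by (simp add: dist_real_def)
        then show "\<bar>f2 y - f2 z\<bar> < \<bar>f2 z\<bar> / 2" using d(2) by (simp add: dist_real_def)
      qed
    qed
  qed
  show ?thesis using eventually_conj[OF eventually_at_right_less eventually_conj[OF e1 eventually_conj[OF e2 e3]]]
    by eventually_elim (simp add: good_def)
qed

lemma eta:
  assumes "good \<delta>"
  shows "\<exists>\<eta>>0. \<forall>y\<in>{a..b}. (\<forall>z\<in>Z. \<delta> \<le> \<bar>y - z\<bar>) \<longrightarrow> \<eta> \<le> \<bar>f1 y\<bar>"
proof -
  define S where "S = {a..b} \<inter> (\<Inter>z\<in>Z. {y. \<delta> \<le> \<bar>y - z\<bar>})"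
  have cl: "closed (\<Inter>z\<in>Z. {y. \<delta> \<le> \<bar>y - z\<bar>})"
    by (auto intro!: closed_INT closed_Collect_le continuous_intros)
  have "compact S" unfolding S_def by (rule compact_Int_closed[OF compact_Icc cl])
  show ?thesis
  proof (cases "S = {}")
    case True
    then show ?thesis by (intro exI[of _ 1]) (auto simp: S_def)
  next
    case False
    have "continuous_on S (\<lambda>y. \<bar>f1 y\<bar>)"
      by (rule continuous_on_subset[of "{a..b}"]) (auto simp: S_def intro!: continuous_intros f1_cont)
    from continuous_attains_inf[OF \<open>compact S\<close> False this]
    obtain y0 where y0: "y0 \<in> S" "\<forall>y\<in>S. \<bar>f1 y0\<bar> \<le> \<bar>f1 y\<bar>" by blast
    have "f1 y0 \<noteq> 0"
    proof
      assume "f1 y0 = 0"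
      moreover have "y0 \<in> {a..b}" using y0 by (auto simp: S_def)
      moreover have "y0 \<noteq> a" "y0 \<noteq> b" using f1a f1b \<open>f1 y0 = 0\<close> by auto
      ultimately have "y0 \<in> Z" unfolding Z_def by auto
      then show False using y0(1) assms by (auto simp: S_def good_def)
    qed
    then show ?thesis using y0 by (intro exI[of _ "\<bar>f1 y0\<bar>"]) (auto simp: S_def)
  qed
qed

lemma c_ex: "\<exists>c>0. \<forall>z\<in>Z. c \<le> \<bar>f2 z\<bar> / 2"
proof -
  have "eventually (\<lambda>c. \<forall>z\<in>Z. c < \<bar>f2 z\<bar> / 2) (at_right 0)"
  proof (rule eventually_ball_finite[OF Z_fin], intro ballI)
    fix z assume "z \<in> Z"
    then have "\<bar>f2 z\<bar> / 2 > 0" using crit_nondeg by (auto simp: Z_def)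
    from ev_lt[OF this] show "eventually (\<lambda>c. c < \<bar>f2 z\<bar> / 2) (at_right 0)" .
  qed
  from ev_obtain[OF this] show ?thesis by (auto intro: less_imp_le)
qed

end



context dens
begin

lemma struct:
  fixes g g1 g2 :: "real \<Rightarrow> real"
  assumes gd: "good \<delta>"
    and eta: "\<forall>y\<in>{a..b}. (\<forall>z\<in>Z. \<delta> \<le> \<bar>y - z\<bar>) \<longrightarrow> \<eta> \<le> \<bar>f1 y\<bar>"
    and cc: "\<forall>z\<in>Z. c \<le> \<bar>f2 z\<bar> / 2"
    and g_d1: "\<And>x. x \<in> {a..b} \<Longrightarrow> (g has_real_derivative g1 x) (at x within {a..b})"
    and g_d2: "\<And>x. x \<in> {a..b} \<Longrightarrow> (g1 has_real_derivative g2 x) (at x within {a..b})"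
    and U1: "\<forall>y\<in>{a..b}. \<bar>g1 y - f1 y\<bar> < \<eta>"
    and U2: "\<forall>y\<in>{a..b}. \<bar>g2 y - f2 y\<bar> < c"
  shows "\<exists>\<phi>. loc_minimizers g a b = \<phi> ` Mn \<and> inj_on \<phi> Mn \<and> (\<forall>z\<in>Mn. \<bar>\<phi> z - z\<bar> < \<delta>)"
proof -
  have dpos: "\<delta> > 0" and bnd: "\<And>z. z \<in> Z \<Longrightarrow> a < z - \<delta> \<and> z + \<delta> < b"
    and sep: "\<And>z z'. z \<in> Z \<Longrightarrow> z' \<in> Z \<Longrightarrow> z \<noteq> z' \<Longrightarrow> 4 * \<delta> < \<bar>z - z'\<bar>"
    and f2c: "\<And>z y. z \<in> Z \<Longrightarrow> \<bar>y - z\<bar> \<le> \<delta> \<Longrightarrow> \<bar>f2 y - f2 z\<bar> < \<bar>f2 z\<bar> / 2"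
    using gd unfolding good_def by auto
  have Zab: "z \<in> {a<..<b}" "f1 z = 0" if "z \<in> Z" for z using that by (auto simp: Z_def)
  have ball_in: "y \<in> {a<..<b}" if "z \<in> Z" "\<bar>y - z\<bar> \<le> \<delta>" for z y
    using bnd[OF that(1)] that(2) by (auto simp: abs_le_iff)
  have G1: "g2 y > 0" if "z \<in> Z" "\<bar>y - z\<bar> \<le> \<delta>" "f2 z > 0" for z y
  proof -
    have "y \<in> {a..b}" using ball_in[OF that(1,2)] by auto
    then have "\<bar>g2 y - f2 y\<bar> < c" using U2 by blast
    moreover have "c \<le> \<bar>f2 z\<bar> / 2" using cc that(1) by blast
    moreover have "\<bar>f2 y - f2 z\<bar> < \<bar>f2 z\<bar> / 2" using f2c[OF that(1,2)] .
    ultimately show ?thesis using that(3) by arith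
  qed
  have G2: "g2 y < 0" if "z \<in> Z" "\<bar>y - z\<bar> \<le> \<delta>" "f2 z < 0" for z y
  proof -
    have "y \<in> {a..b}" using ball_in[OF that(1,2)] by auto
    then have "\<bar>g2 y - f2 y\<bar> < c" using U2 by blast
    moreover have "c \<le> \<bar>f2 z\<bar> / 2" using cc that(1) by blast
    moreover have "\<bar>f2 y - f2 z\<bar> < \<bar>f2 z\<bar> / 2" using f2c[OF that(1,2)] .
    ultimately show ?thesis using that(3) by arith
  qed
  have zero_near: "\<exists>z\<in>Z. \<bar>y - z\<bar> < \<delta>" if "y \<in> {a..b}" "g1 y = 0" for y
  proof (rule ccontr)
    assume "\<not> ?thesis"
    then have "\<forall>z\<in>Z. \<delta> \<le> \<bar>y - z\<bar>" by auto
    then have "\<eta> \<le> \<bar>f1 y\<bar>" using eta that(1) by blast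
    moreover have "\<bar>g1 y - f1 y\<bar> < \<eta>" using U1 that(1) by blast
    ultimately show False using that(2) by simp
  qed
  have f2nz: "f2 z \<noteq> 0" if "z \<in> Z" for z using crit_nondeg Zab[OF that] by blast
  have nd: "g2 y \<noteq> 0" if yy: "y \<in> {a<..<b}" "g1 y = 0" for y
  proof -
    obtain z where z: "z \<in> Z" "\<bar>y - z\<bar> < \<delta>" using zero_near[of y] yy by auto
    show ?thesis
    proof (cases "f2 z > 0")
      case True then show ?thesis using G1[OF z(1), of y] z by simp
    next
      case False then have "f2 z < 0" using f2nz[OF z(1)] by simp
      then show ?thesis using G2[OF z(1), of y] z by simp
    qed
  qed
  have LM: "loc_minimizers g a b = {y \<in> {a<..<b}. g1 y = 0 \<and> g2 y > 0}"
    by (rule locmin_char) (use g_d1 g_d2 nd in auto)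
  have DG1: "(g1 has_real_derivative g2 t) (at t)" if "t \<in> {a<..<b}" for t
    using deriv_int[OF that g_d2] that by auto
  have DF1: "(f1 has_real_derivative f2 t) (at t)" if "t \<in> {a<..<b}" for t
    using deriv_int[OF that f_d2] that by auto
  have uniq0: "False" if "z \<in> Mn" "\<bar>w - z\<bar> < \<delta>" "\<bar>w' - z\<bar> < \<delta>" "g1 w = 0" "g1 w' = 0" "w < w'" for z w w'
  proof -
    have zZ: "z \<in> Z" and fz: "f2 z > 0" using that(1) by (auto simp: Mn_def)
    have "g1 w < g1 w'"
    proof (rule mvt_pos[of w w' g1 g2])
      show "(g1 has_real_derivative g2 t) (at t)" if "w \<le> t" "t \<le> w'" for t
        using that \<open>\<bar>w - z\<bar> < \<delta>\<close> \<open>\<bar>w' - z\<bar> < \<delta>\<close> by (intro DG1 ball_in[OF zZ]) (auto simp: abs_le_iff abs_less_iff)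
      show "g2 t > 0" if "w < t" "t < w'" for t
        using that \<open>\<bar>w - z\<bar> < \<delta>\<close> \<open>\<bar>w' - z\<bar> < \<delta>\<close> by (intro G1[OF zZ _ fz]) (auto simp: abs_le_iff abs_less_iff)
    qed fact
    then show False using that by simp
  qed
  have uniq: "w = w'" if "z \<in> Mn" "\<bar>w - z\<bar> < \<delta>" "\<bar>w' - z\<bar> < \<delta>" "g1 w = 0" "g1 w' = 0" for z w w'
    using uniq0[of z w w'] uniq0[of z w' w] that by (cases w w' rule: linorder_cases) auto
  have exist: "\<exists>w. \<bar>w - z\<bar> < \<delta> \<and> g1 w = 0" if zM: "z \<in> Mn" for z
  proof -
    have zZ: "z \<in> Z" and fz: "f2 z > 0" using zM by (auto simp: Mn_def)
    have f2p: "f2 t > 0" if "\<bar>t - z\<bar> \<le> \<delta>" for t using f2c[OF zZ that] fz by arith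
    have l: "f1 (z - \<delta>) < f1 z"
    proof (rule mvt_pos[of "z - \<delta>" z f1 f2])
      show "(f1 has_real_derivative f2 t) (at t)" if "z - \<delta> \<le> t" "t \<le> z" for t
        using that dpos by (intro DF1 ball_in[OF zZ]) (auto simp: abs_le_iff)
      show "f2 t > 0" if "z - \<delta> < t" "t < z" for t using that by (intro f2p) (auto simp: abs_le_iff)
    qed (use dpos in simp)
    have r: "f1 z < f1 (z + \<delta>)"
    proof (rule mvt_pos[of z "z + \<delta>" f1 f2])
      show "(f1 has_real_derivative f2 t) (at t)" if "z \<le> t" "t \<le> z + \<delta>" for t
        using that dpos by (intro DF1 ball_in[OF zZ]) (auto simp: abs_le_iff)
      show "f2 t > 0" if "z < t" "t < z + \<delta>" for t using that by (intro f2p) (auto simp: abs_le_iff)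
    qed (use dpos in simp)
    have far: "\<forall>z'\<in>Z. \<delta> \<le> \<bar>y - z'\<bar>" if "\<bar>y - z\<bar> = \<delta>" for y
    proof
      fix z' assume z': "z' \<in> Z"
      show "\<delta> \<le> \<bar>y - z'\<bar>"
      proof (cases "z' = z")
        case False
        then have "4 * \<delta> < \<bar>z - z'\<bar>" using sep[OF zZ z'] by simp
        then show ?thesis using that by (auto simp: abs_if split: if_splits)
      qed (use that in simp)
    qed
    have inab1: "z - \<delta> \<in> {a..b}" "z + \<delta> \<in> {a..b}" using bnd[OF zZ] dpos by auto
    have "\<eta> \<le> \<bar>f1 (z - \<delta>)\<bar>" using eta inab1(1) far[of "z - \<delta>"] dpos by auto
    moreover have "\<bar>g1 (z - \<delta>) - f1 (z - \<delta>)\<bar> < \<eta>" using U1 inab1(1) by blast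
    ultimately have gl: "g1 (z - \<delta>) < 0" using l Zab[OF zZ] by arith
    have "\<eta> \<le> \<bar>f1 (z + \<delta>)\<bar>" using eta inab1(2) far[of "z + \<delta>"] dpos by auto
    moreover have "\<bar>g1 (z + \<delta>) - f1 (z + \<delta>)\<bar> < \<eta>" using U1 inab1(2) by blast
    ultimately have gr: "g1 (z + \<delta>) > 0" using r Zab[OF zZ] by arith
    have "\<exists>w. z - \<delta> \<le> w \<and> w \<le> z + \<delta> \<and> g1 w = 0"
    proof (rule IVT[of g1 "z - \<delta>" 0 "z + \<delta>"])
      show "\<forall>x. z - \<delta> \<le> x \<and> x \<le> z + \<delta> \<longrightarrow> isCont g1 x"
      proof (intro allI impI)
        fix x assume "z - \<delta> \<le> x \<and> x \<le> z + \<delta>"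
        then have "x \<in> {a<..<b}" using ball_in[OF zZ, of x] by (auto simp: abs_le_iff)
        then show "isCont g1 x" using DG1 DERIV_isCont by blast
      qed
    qed (use gl gr dpos in auto)
    then obtain w where w: "z - \<delta> \<le> w" "w \<le> z + \<delta>" "g1 w = 0" by blast
    have "w \<noteq> z - \<delta>" "w \<noteq> z + \<delta>" using gl gr w by auto
    then have "\<bar>w - z\<bar> < \<delta>" using w by (auto simp: abs_less_iff)
    then show ?thesis using w by blast
  qed
  define \<phi> where "\<phi> z = (SOME w. \<bar>w - z\<bar> < \<delta> \<and> g1 w = 0)" for z
  have \<phi>: "\<bar>\<phi> z - z\<bar> < \<delta>" "g1 (\<phi> z) = 0" if "z \<in> Mn" for z
    using someI_ex[OF exist[OF that]] unfolding \<phi>_def by auto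
  have "loc_minimizers g a b = \<phi> ` Mn"
  proof
    show "loc_minimizers g a b \<subseteq> \<phi> ` Mn"
    proof
      fix y assume "y \<in> loc_minimizers g a b"
      then have y: "y \<in> {a<..<b}" "g1 y = 0" "g2 y > 0" using LM by auto
      obtain z where z: "z \<in> Z" "\<bar>y - z\<bar> < \<delta>" using zero_near[of y] y by auto
      have "f2 z > 0"
      proof (rule ccontr)
        assume "\<not> f2 z > 0"
        then have "f2 z < 0" using f2nz[OF z(1)] by simp
        then show False using G2[OF z(1), of y] z y by simp
      qed
      then have zM: "z \<in> Mn" using z by (auto simp: Mn_def)
      have "y = \<phi> z" using uniq[OF zM z(2) \<phi>(1)[OF zM] y(2) \<phi>(2)[OF zM]] .
      then show "y \<in> \<phi> ` Mn" using zM by blast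
    qed
    show "\<phi> ` Mn \<subseteq> loc_minimizers g a b"
    proof
      fix y assume "y \<in> \<phi> ` Mn"
      then obtain z where zM: "z \<in> Mn" and yz: "y = \<phi> z" by blast
      have zZ: "z \<in> Z" and fz: "f2 z > 0" using zM by (auto simp: Mn_def)
      have "y \<in> {a<..<b}" using ball_in[OF zZ, of y] \<phi>(1)[OF zM] yz by simp
      moreover have "g1 y = 0" using \<phi>(2)[OF zM] yz by simp
      moreover have "g2 y > 0" using G1[OF zZ _ fz, of y] \<phi>(1)[OF zM] yz by simp
      ultimately show "y \<in> loc_minimizers g a b" using LM by simp
    qed
  qed
  moreover have "inj_on \<phi> Mn"
  proof (rule inj_onI, rule ccontr)
    fix z z' assume zz: "z \<in> Mn" "z' \<in> Mn" "\<phi> z = \<phi> z'" "z \<noteq> z'"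
    then have "4 * \<delta> < \<bar>z - z'\<bar>" using sep Mn_Z by blast
    moreover have "\<bar>\<phi> z - z\<bar> < \<delta>" using \<phi>(1)[OF zz(1)] .
    moreover have "\<bar>\<phi> z' - z'\<bar> < \<delta>" using \<phi>(1)[OF zz(2)] .
    ultimately show False using zz(3) dpos by arith
  qed
  ultimately show ?thesis using \<phi>(1) by blast
qed

end



lemma sorted_image:
  fixes \<phi> :: "real \<Rightarrow> real"
  assumes fin: "finite A" and mono: "\<And>x y. x \<in> A \<Longrightarrow> y \<in> A \<Longrightarrow> x < y \<Longrightarrow> \<phi> x < \<phi> y"
  shows "sorted_list_of_set (\<phi> ` A) = map \<phi> (sorted_list_of_set A)"
proof -
  have inj: "inj_on \<phi> A"
  proof (rule inj_onI)
    fix x y assume "x \<in> A" "y \<in> A" "\<phi> x = \<phi> y"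
    then show "x = y" using mono[of x y] mono[of y x] by (cases x y rule: linorder_cases) auto
  qed
  have s: "sorted_wrt (<) (sorted_list_of_set A)" by (rule strict_sorted_list_of_set)
  have "sorted_wrt (<) (map \<phi> (sorted_list_of_set A))"
    unfolding sorted_wrt_map using fin
    by (intro sorted_wrt_mono_rel[OF _ s]) (auto intro: mono)
  moreover have "set (map \<phi> (sorted_list_of_set A)) = \<phi> ` A" using fin by simp
  moreover have "length (map \<phi> (sorted_list_of_set A)) = card (\<phi> ` A)"
    using fin inj by (simp add: card_image)
  ultimately show ?thesis
    using sorted_list_of_set_unique[of "\<phi> ` A" "map \<phi> (sorted_list_of_set A)"] fin by simp
qed

lemma le_SUP_cont:
  fixes h :: "real \<Rightarrow> real"
  assumes "continuous_on {a..b} h" "y \<in> {a..b}"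
  shows "h y \<le> (SUP x\<in>{a..b}. h x)"
proof (rule cSUP_upper[OF assms(2)])
  show "bdd_above (h ` {a..b})"
    by (rule bounded_imp_bdd_above[OF compact_imp_bounded[OF compact_continuous_image[OF assms(1) compact_Icc]]])
qed

context dens
begin

lemma det:
  fixes g g1 g2 :: "nat \<Rightarrow> real \<Rightarrow> real"
  assumes d1: "\<And>n x. x \<in> {a..b} \<Longrightarrow> (g n has_real_derivative g1 n x) (at x within {a..b})"
    and d2: "\<And>n x. x \<in> {a..b} \<Longrightarrow> (g1 n has_real_derivative g2 n x) (at x within {a..b})"
    and g2c: "\<And>n. continuous_on {a..b} (g2 n)"
    and c1: "(\<lambda>n. SUP x\<in>{a..b}. \<bar>g1 n x - f1 x\<bar>) \<longlonglongrightarrow> 0"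
    and c2: "(\<lambda>n. SUP x\<in>{a..b}. \<bar>g2 n x - f2 x\<bar>) \<longlonglongrightarrow> 0"
  shows "\<exists>n0. \<forall>n\<ge>n0.
           finite (loc_minimizers (g n) a b) \<and>
           card (loc_minimizers (g n) a b) = card (loc_minimizers f a b) \<and>
           clust_dist P (modal_clustering (g n) a b) (modal_clustering f a b)
               = (\<Sum>j<length (sorted_list_of_set (loc_minimizers f a b)).
                   \<bar>F (sorted_list_of_set (loc_minimizers (g n) a b) ! j) -
                    F (sorted_list_of_set (loc_minimizers f a b) ! j)\<bar>)"
proof -
  define m where "m = sorted_list_of_set Mn"
  define k where "k = length m"
  have mss: "sorted_wrt (<) m" unfolding m_def by (rule strict_sorted_list_of_set)
  have mset: "set m = Mn" unfolding m_def using Mn_fin by simp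
  have kcard: "k = card Mn" unfolding k_def m_def by simp
  have inM: "m ! j \<in> Mn" if "j < k" for j using that mset nth_mem k_def by blast
  have inZ: "m ! j \<in> Z" if "j < k" for j using inM[OF that] Mn_Z by blast
  have Zab: "z \<in> {a<..<b}" if "z \<in> Z" for z using that by (auto simp: Z_def)
  have mlt: "m ! i < m ! j" if "i < j" "j < k" for i j
    using sorted_wrt_nth_less[OF mss that(1)] that k_def by simp
  obtain B where B: "B > 0" "\<forall>x. f x \<le> B" using f_bound by blast
  have LU: "Lo m i < Up m i \<and> a \<le> Lo m i \<and> Up m i \<le> b" if "i \<le> k" for i
  proof -
    have "Lo m i < Up m i"
    proof (cases "i = 0")
      case True
      then show ?thesis using ab Zab[OF inZ[of 0]] by (auto simp: Lo_def Up_def k_def)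
    next
      case False
      then have "i - 1 < k" using that by simp
      then have "m ! (i - 1) \<in> {a<..<b}" using Zab inZ by blast
      moreover have "i < k \<Longrightarrow> m ! (i - 1) < m ! i" using mlt[of "i - 1" i] False by simp
      ultimately show ?thesis using False that by (auto simp: Lo_def Up_def k_def)
    qed
    moreover have "a \<le> Lo m i"
    proof (cases "i = 0")
      case False
      then have ik: "i - 1 < k" using that by simp
      show ?thesis using Zab[OF inZ[OF ik]] False by (simp add: Lo_def)
    qed (simp add: Lo_def)
    moreover have "Up m i \<le> b"
      using Zab[OF inZ[of i]] that by (auto simp: Up_def k_def)
    ultimately show ?thesis by simp
  qed
  have "eventually (\<lambda>\<mu>. \<forall>i\<in>{..k}. \<mu> < measure P {Lo m i<..<Up m i}) (at_right 0)"
  proof (rule eventually_ball_finite)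
    show "finite {..k}" by simp
    show "\<forall>i\<in>{..k}. eventually (\<lambda>\<mu>. \<mu> < measure P {Lo m i<..<Up m i}) (at_right 0)"
    proof
      fix i assume "i \<in> {..k}"
      then have "i \<le> k" by simp
      from LU[OF this] have "measure P {Lo m i<..<Up m i} > 0" using interval_pos by blast
      then show "eventually (\<lambda>\<mu>. \<mu> < measure P {Lo m i<..<Up m i}) (at_right 0)" by (rule ev_lt)
    qed
  qed
  from ev_obtain[OF this] obtain \<mu> where mu0: "\<mu> > 0" "\<forall>i\<in>{..k}. \<mu> < measure P {Lo m i<..<Up m i}"
    by blast
  have mu: "\<mu> > 0" "\<And>i. i \<le> k \<Longrightarrow> \<mu> < measure P {Lo m i<..<Up m i}" using mu0 by auto
  have kB0: "real k * B \<ge> 0" using B by simp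
  have "\<mu> / (4 * (real k * B + 1)) > 0" using mu kB0 by (intro divide_pos_pos) auto
  from ev_obtain[OF eventually_conj[OF ev_good ev_lt[OF this]]]
  obtain \<delta> where gd: "good \<delta>" and dsm: "\<delta> < \<mu> / (4 * (real k * B + 1))"
    by blast
  have dpos: "\<delta> > 0" and bnd: "\<And>z. z \<in> Z \<Longrightarrow> a < z - \<delta> \<and> z + \<delta> < b"
    and sep: "\<And>z z'. z \<in> Z \<Longrightarrow> z' \<in> Z \<Longrightarrow> z \<noteq> z' \<Longrightarrow> 4 * \<delta> < \<bar>z - z'\<bar>"
    using gd unfolding good_def by auto
  have kBd: "real k * B * \<delta> \<le> \<mu> / 4"
  proof -
    have pos: "4 * (real k * B + 1) > 0" using kB0 by simp
    have "\<delta> * (4 * (real k * B + 1)) < \<mu>" using dsm pos by (simp add: field_simps)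
    then show ?thesis using dpos by (simp add: algebra_simps)
  qed
  have msep: "m ! j + 4 * \<delta> < m ! (j + 1)" if "j + 1 < k" for j
  proof -
    have "m ! j < m ! (j + 1)" using mlt that by simp
    moreover have "4 * \<delta> < \<bar>m ! j - m ! (j + 1)\<bar>"
      using sep[OF inZ[of j] inZ[of "j + 1"]] that calculation by simp
    ultimately show ?thesis by arith
  qed
  obtain \<eta> where eta: "\<eta> > 0" "\<forall>y\<in>{a..b}. (\<forall>z\<in>Z. \<delta> \<le> \<bar>y - z\<bar>) \<longrightarrow> \<eta> \<le> \<bar>f1 y\<bar>"
    using eta[OF gd] by blast
  obtain c where c: "c > 0" "\<forall>z\<in>Z. c \<le> \<bar>f2 z\<bar> / 2" using c_ex by blast
  from eventually_conj[OF order_tendstoD(2)[OF c1 eta(1)] order_tendstoD(2)[OF c2 c(1)]]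
  obtain n0 where n0: "\<And>n. n \<ge> n0 \<Longrightarrow> (SUP x\<in>{a..b}. \<bar>g1 n x - f1 x\<bar>) < \<eta> \<and> (SUP x\<in>{a..b}. \<bar>g2 n x - f2 x\<bar>) < c"
    unfolding eventually_sequentially by blast
  have mlocf: "loc_minimizers f a b = Mn" by (rule locmin_f)
  show ?thesis
  proof (intro exI[of _ n0] allI impI)
    fix n assume "n \<ge> n0"
    note n0 = n0[OF this]
    have cg1: "continuous_on {a..b} (g1 n)" by (rule deriv_cont_on[OF d2])
    have U1: "\<forall>y\<in>{a..b}. \<bar>g1 n y - f1 y\<bar> < \<eta>"
    proof
      fix y assume y: "y \<in> {a..b}"
      have "\<bar>g1 n y - f1 y\<bar> \<le> (SUP x\<in>{a..b}. \<bar>g1 n x - f1 x\<bar>)"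
        by (rule le_SUP_cont[OF _ y]) (intro continuous_intros cg1 f1_cont)
      then show "\<bar>g1 n y - f1 y\<bar> < \<eta>" using n0 by simp
    qed
    have U2: "\<forall>y\<in>{a..b}. \<bar>g2 n y - f2 y\<bar> < c"
    proof
      fix y assume y: "y \<in> {a..b}"
      have "\<bar>g2 n y - f2 y\<bar> \<le> (SUP x\<in>{a..b}. \<bar>g2 n x - f2 x\<bar>)"
        by (rule le_SUP_cont[OF _ y]) (intro continuous_intros g2c f2_cont)
      then show "\<bar>g2 n y - f2 y\<bar> < c" using n0 by simp
    qed
    obtain \<phi> where \<phi>: "loc_minimizers (g n) a b = \<phi> ` Mn" "inj_on \<phi> Mn" "\<And>z. z \<in> Mn \<Longrightarrow> \<bar>\<phi> z - z\<bar> < \<delta>"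
      using struct[OF gd eta(2) c(2) d1[of _ n] d2[of _ n] U1 U2] by blast
    have fin: "finite (loc_minimizers (g n) a b)" using \<phi>(1) Mn_fin by simp
    have card: "card (loc_minimizers (g n) a b) = card (loc_minimizers f a b)"
      using \<phi>(1,2) mlocf by (simp add: card_image)
    have \<phi>mono: "\<phi> x < \<phi> y" if "x \<in> Mn" "y \<in> Mn" "x < y" for x y
    proof -
      have "4 * \<delta> < \<bar>x - y\<bar>" using sep that Mn_Z by (metis less_irrefl subsetD)
      moreover have "\<bar>\<phi> x - x\<bar> < \<delta>" "\<bar>\<phi> y - y\<bar> < \<delta>" using \<phi>(3) that by auto
      ultimately show ?thesis using that(3) by arith
    qed
    define mh where "mh = map \<phi> m"
    have mh_eq: "sorted_list_of_set (loc_minimizers (g n) a b) = mh"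
      unfolding \<phi>(1) mh_def m_def by (rule sorted_image[OF Mn_fin \<phi>mono])
    have lenmh: "length mh = k" by (simp add: mh_def k_def)
    have mhj: "mh ! j = \<phi> (m ! j)" "\<bar>mh ! j - m ! j\<bar> < \<delta>" if "j < k" for j
      using that \<phi>(3)[OF inM[OF that]] by (auto simp: mh_def k_def)
    have mb: "a < m ! j - \<delta>" "m ! j + \<delta> < b" if "j < k" for j using bnd[OF inZ[OF that]] by auto
    have ord: "max (Lo mh i) (Lo m i) < min (Up mh i) (Up m i)" if i: "i \<le> k" for i
    proof -
      have lo: "Lo mh i \<le> (if i = 0 then a else m ! (i - 1) + \<delta>) \<and> Lo m i \<le> (if i = 0 then a else m ! (i - 1) + \<delta>)"
      proof (cases "i = 0")
        case False
        then have ik: "i - 1 < k" using i by simp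
        show ?thesis using mhj(2)[OF ik] False dpos by (auto simp: Lo_def)
      qed (simp add: Lo_def)
      have up: "(if i = k then b else m ! i - \<delta>) \<le> Up mh i \<and> (if i = k then b else m ! i - \<delta>) \<le> Up m i"
      proof (cases "i = k")
        case False
        then have ik: "i < k" using i by simp
        show ?thesis using mhj(2)[OF ik] False dpos lenmh by (auto simp: Up_def k_def)
      qed (use lenmh in \<open>simp add: Up_def k_def\<close>)
      have mid: "(if i = 0 then a else m ! (i - 1) + \<delta>) < (if i = k then b else m ! i - \<delta>)"
      proof (cases "i = 0")
        case True
        then show ?thesis using ab mb(1)[of 0] dpos by auto
      next
        case False
        then have ik: "i - 1 < k" using i by simp
        show ?thesis
        proof (cases "i = k")
          case True then show ?thesis using mb(2)[OF ik] False by simp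
        next
          case nk: False
          then have "i - 1 + 1 < k" using i False by simp
          from msep[OF this] show ?thesis using False nk dpos by simp
        qed
      qed
      show ?thesis using lo up mid by linarith
    qed
    have small: "(\<Sum>j<k. \<bar>F (mh ! j) - F (m ! j)\<bar>) \<le> \<mu> / 4"
    proof -
      have "(\<Sum>j<k. \<bar>F (mh ! j) - F (m ! j)\<bar>) \<le> (\<Sum>j<k. B * \<delta>)"
      proof (rule sum_mono)
        fix j assume "j \<in> {..<k}"
        then have "\<bar>mh ! j - m ! j\<bar> < \<delta>" using mhj by simp
        moreover have "\<bar>F (mh ! j) - F (m ! j)\<bar> \<le> B * \<bar>mh ! j - m ! j\<bar>" using F_lip_abs[OF B(2)] .
        ultimately show "\<bar>F (mh ! j) - F (m ! j)\<bar> \<le> B * \<delta>" using B(1)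
          by (smt (verit) mult_left_mono)
      qed
      also have "\<dots> = real k * B * \<delta>" by simp
      finally show ?thesis using kBd by simp
    qed
    have sub1: "set m \<subseteq> {a<..<b}" using mset Mn_Z Zab by blast
    have sub2: "set mh \<subseteq> {a<..<b}"
    proof -
      have "set mh = loc_minimizers (g n) a b" using mh_eq fin by (metis set_sorted_list_of_set)
      then show ?thesis by (auto simp: loc_minimizers_def)
    qed
    have cd: "clust_dist P (clus mh) (clus m) = (\<Sum>j<k. \<bar>F (mh ! j) - F (m ! j)\<bar>)"
      by (rule CD[where \<mu>=\<mu>, OF k_def[symmetric] lenmh strict_sorted_imp_sorted[OF mss] sub1 sub2 ord])
         (use mu small in \<open>auto intro: less_imp_le\<close>)
    show "finite (loc_minimizers (g n) a b) \<and>
           card (loc_minimizers (g n) a b) = card (loc_minimizers f a b) \<and>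
           clust_dist P (modal_clustering (g n) a b) (modal_clustering f a b)
               = (\<Sum>j<length (sorted_list_of_set (loc_minimizers f a b)).
                   \<bar>F (sorted_list_of_set (loc_minimizers (g n) a b) ! j) -
                    F (sorted_list_of_set (loc_minimizers f a b) ! j)\<bar>)"
      using fin card cd unfolding modal_clus mh_eq mlocf by (simp add: m_def[symmetric] k_def)
  qed
qed

end

theorem mainTheorem3:
  fixes f f1 f2 f3 :: "real \<Rightarrow> real" and a b :: real
    and M :: "'w measure"
    and fhat fhat1 fhat2 :: "nat \<Rightarrow> 'w \<Rightarrow> real \<Rightarrow> real"
  assumes "a < b"
    and f_nonneg: "\<And>x. f x \<ge> 0"
    and P_prob: "prob_space (density lborel (\<lambda>x. ennreal (f x)))"
    and f_zero: "\<And>x. x \<notin> {a..b} \<Longrightarrow> f x = 0"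
    and f_d1: "\<And>x. x \<in> {a..b} \<Longrightarrow> (f has_real_derivative f1 x) (at x within {a..b})"
    and f_d2: "\<And>x. x \<in> {a..b} \<Longrightarrow> (f1 has_real_derivative f2 x) (at x within {a..b})"
    and f_d3: "\<And>x. x \<in> {a..b} \<Longrightarrow> (f2 has_real_derivative f3 x) (at x within {a..b})"
    and f3_cont: "continuous_on {a..b} f3"
    and "f1 a \<noteq> 0" and "f1 b \<noteq> 0"
    and crit_fin: "finite {x \<in> {a<..<b}. f1 x = 0}"
    and crit_nondeg: "\<And>x. x \<in> {a<..<b} \<Longrightarrow> f1 x = 0 \<Longrightarrow> f2 x \<noteq> 0"
    and M_prob: "prob_space M"
    and fhat_d1: "\<And>n \<omega> x. x \<in> {a..b} \<Longrightarrow>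
        (fhat n \<omega> has_real_derivative fhat1 n \<omega> x) (at x within {a..b})"
    and fhat_d2: "\<And>n \<omega> x. x \<in> {a..b} \<Longrightarrow>
        (fhat1 n \<omega> has_real_derivative fhat2 n \<omega> x) (at x within {a..b})"
    and fhat2_cont: "\<And>n \<omega>. continuous_on {a..b} (fhat2 n \<omega>)"
    and conv: "AE \<omega> in M.
        (\<lambda>n. SUP x\<in>{a..b}. \<bar>fhat1 n \<omega> x - f1 x\<bar>) \<longlonglongrightarrow> 0 \<and>
        (\<lambda>n. SUP x\<in>{a..b}. \<bar>fhat2 n \<omega> x - f2 x\<bar>) \<longlonglongrightarrow> 0"
  shows "AE \<omega> in M. \<exists>n0. \<forall>n\<ge>n0.
           finite (loc_minimizers (fhat n \<omega>) a b) \<and>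
           card (loc_minimizers (fhat n \<omega>) a b) = card (loc_minimizers f a b) \<and>
           (let P = density lborel (\<lambda>x. ennreal (f x));
                F = (\<lambda>t. measure P {..t});
                mh = sorted_list_of_set (loc_minimizers (fhat n \<omega>) a b);
                m = sorted_list_of_set (loc_minimizers f a b)
            in clust_dist P (modal_clustering (fhat n \<omega>) a b) (modal_clustering f a b)
               = (\<Sum>j<length m. \<bar>F (mh ! j) - F (m ! j)\<bar>))"
proof -
  have f2c: "continuous_on {a..b} f2" using deriv_cont_on f_d3 by blast
  interpret dens f f1 f2 a b
    by (rule dens.intro) (fact assms f2c)+
  show ?thesis
  proof (rule AE_mp[OF conv], rule AE_I2, rule impI)
    fix \<omega>
    assume c: "(\<lambda>n. SUP x\<in>{a..b}. \<bar>fhat1 n \<omega> x - f1 x\<bar>) \<longlonglongrightarrow> 0 \<and>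
        (\<lambda>n. SUP x\<in>{a..b}. \<bar>fhat2 n \<omega> x - f2 x\<bar>) \<longlonglongrightarrow> 0"
    have "\<exists>n0. \<forall>n\<ge>n0.
           finite (loc_minimizers (fhat n \<omega>) a b) \<and>
           card (loc_minimizers (fhat n \<omega>) a b) = card (loc_minimizers f a b) \<and>
           clust_dist P (modal_clustering (fhat n \<omega>) a b) (modal_clustering f a b)
               = (\<Sum>j<length (sorted_list_of_set (loc_minimizers f a b)).
                   \<bar>F (sorted_list_of_set (loc_minimizers (fhat n \<omega>) a b) ! j) -
                    F (sorted_list_of_set (loc_minimizers f a b) ! j)\<bar>)"
      by (rule det[of "\<lambda>n. fhat n \<omega>" "\<lambda>n. fhat1 n \<omega>" "\<lambda>n. fhat2 n \<omega>", OF fhat_d1 fhat_d2 fhat2_cont])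
         (use c in auto)
    then show "\<exists>n0. \<forall>n\<ge>n0.
           finite (loc_minimizers (fhat n \<omega>) a b) \<and>
           card (loc_minimizers (fhat n \<omega>) a b) = card (loc_minimizers f a b) \<and>
           (let P = density lborel (\<lambda>x. ennreal (f x));
                F = (\<lambda>t. measure P {..t});
                mh = sorted_list_of_set (loc_minimizers (fhat n \<omega>) a b);
                m = sorted_list_of_set (loc_minimizers f a b)
            in clust_dist P (modal_clustering (fhat n \<omega>) a b) (modal_clustering f a b)
               = (\<Sum>j<length m. \<bar>F (mh ! j) - F (m ! j)\<bar>))"
      unfolding Let_def F_def by simp
  qed
qed

end
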